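(* Let $d\ge2$, $\gamma>0$, $\beta\in(0,1)$, and let $\psi:\mathbb R^d\to\mathbb C^d$ be a vector field (with the integrals below convergent) such that $\mathcal R_\beta[\psi]=\psi$. Then $\mathcal R_{\beta^n}[\psi]=\psi$ for every $n\in\mathbb N$.
   Context: Let $c=\gamma-d-1$. For $\beta\in(0,1)$ and $\vartheta:\mathbb R^d\to\mathbb C^d$, $$\mathcal R_\beta[\vartheta](\eta)=\beta^c e^{|\eta|^\gamma(1-\beta^{-\gamma})}\vartheta(\eta/\beta)+i\gamma\int_1^{1/\beta}\frac{e^{|\eta|^\gamma(1-t^\gamma)}}{t^c}\int_{\mathbb R^d}\big(\eta\cdot\vartheta(\eta t-x)\big)\,P_\eta\vartheta(x)\,dx\,dt,$$ where $a\cdot b=\sum_ja_jb_j$ and $P_\eta w=w-\frac{w\cdot\eta}{|\eta|^2}\eta$. *)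

theory Defs
  imports "HOL-Analysis.Analysis"
begin

text \<open>Vectors in C^d are modelled as complex^'n, vectors in R^d as real^'n,
  with d = CARD('n).\<close>

definition cvec :: "real^'n \<Rightarrow> complex^'n" where
  "cvec \<eta> = (\<chi> j. complex_of_real (\<eta> $ j))"

text \<open>Bilinear (non-conjugated) dot product a . b = sum_j a_j b_j.\<close>
definition cdot :: "complex^'n \<Rightarrow> complex^'n \<Rightarrow> complex" where
  "cdot a b = (\<Sum>j\<in>UNIV. a $ j * b $ j)"

definition cscale :: "complex \<Rightarrow> complex^'n \<Rightarrow> complex^'n" where
  "cscale s w = (\<chi> j. s * w $ j)"

definition Pproj :: "real^'n \<Rightarrow> complex^'n \<Rightarrow> complex^'n" where
  "Pproj \<eta> w = w - cscale (cdot w (cvec \<eta>) / complex_of_real ((norm \<eta>)\<^sup>2)) (cvec \<eta>)"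

definition cexp :: "real \<Rightarrow> 'n::finite itself \<Rightarrow> real" where
  "cexp \<gamma> _ = \<gamma> - real CARD('n) - 1"

definition inner_integrand ::
  "(real^'n \<Rightarrow> complex^'n) \<Rightarrow> real^'n \<Rightarrow> real \<Rightarrow> real^'n \<Rightarrow> complex^'n" where
  "inner_integrand \<theta> \<eta> t x = cscale (cdot (cvec \<eta>) (\<theta> (t *\<^sub>R \<eta> - x))) (Pproj \<eta> (\<theta> x))"

definition inner_int ::
  "(real^'n \<Rightarrow> complex^'n) \<Rightarrow> real^'n \<Rightarrow> real \<Rightarrow> complex^'n" where
  "inner_int \<theta> \<eta> t = integral\<^sup>L lborel (inner_integrand \<theta> \<eta> t)"

definition outer_integrand ::
  "real \<Rightarrow> (real^'n \<Rightarrow> complex^'n) \<Rightarrow> real^'n \<Rightarrow> real \<Rightarrow> complex^'n" where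
  "outer_integrand \<gamma> \<theta> \<eta> t =
     (exp ((norm \<eta>) powr \<gamma> * (1 - t powr \<gamma>)) / t powr (cexp \<gamma> TYPE('n)))
       *\<^sub>R inner_int \<theta> \<eta> t"

definition Rop ::
  "real \<Rightarrow> real \<Rightarrow> (real^'n \<Rightarrow> complex^'n) \<Rightarrow> real^'n \<Rightarrow> complex^'n" where
  "Rop \<gamma> \<beta> \<theta> \<eta> =
     (\<beta> powr (cexp \<gamma> TYPE('n)) * exp ((norm \<eta>) powr \<gamma> * (1 - \<beta> powr (-\<gamma>))))
        *\<^sub>R \<theta> ((1 / \<beta>) *\<^sub>R \<eta>)
     + cscale (\<i> * complex_of_real \<gamma>)
         (set_lebesgue_integral lborel {1..1/\<beta>} (outer_integrand \<gamma> \<theta> \<eta>))"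

end

theory Submission
  imports Defs
begin

lemma scC: "r *\<^sub>R (z::complex) = complex_of_real r * z"
  by (simp add: scaleR_conv_of_real)

lemma cdot_scale: "cdot (cvec (r *\<^sub>R \<eta>)) w = complex_of_real r * cdot (cvec \<eta>) w"
  unfolding cdot_def cvec_def by (simp add: sum_distrib_left algebra_simps)

lemma cdot_scale2: "cdot w (cvec (r *\<^sub>R \<eta>)) = complex_of_real r * cdot w (cvec \<eta>)"
  unfolding cdot_def cvec_def by (simp add: sum_distrib_left algebra_simps)

lemma cvec_scale: "cvec (r *\<^sub>R \<eta>) = r *\<^sub>R cvec \<eta>"
  unfolding cvec_def by (simp add: vec_eq_iff scC)

lemma Pproj_scale:
  assumes "r \<noteq> 0" shows "Pproj (r *\<^sub>R \<eta>) w = Pproj \<eta> w"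
proof -
  have "complex_of_real r * X / complex_of_real ((norm (r *\<^sub>R \<eta>))\<^sup>2) * (complex_of_real r * v)
      = X / complex_of_real ((norm \<eta>)\<^sup>2) * v" for X v
  proof (cases "norm \<eta> = 0")
    case True then show ?thesis by simp
  next
    case False
    have "complex_of_real \<bar>r\<bar> * complex_of_real \<bar>r\<bar> = complex_of_real r * complex_of_real r"
      by (metis abs_mult_self_eq of_real_mult)
    then show ?thesis using assms False
      by (simp add: power_mult_distrib power2_eq_square field_simps)
  qed
  then show ?thesis
    unfolding Pproj_def cscale_def cdot_scale2
    by (simp add: vec_eq_iff cvec_def)
qed

lemma cscale_add: "cscale z (u + v) = cscale z u + cscale z v"
  unfolding cscale_def by (simp add: vec_eq_iff algebra_simps)

lemma cscale_scaleR: "cscale z (r *\<^sub>R v) = r *\<^sub>R cscale z v"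
  unfolding cscale_def by (simp add: vec_eq_iff scC algebra_simps)

lemma cscale_mult: "cscale (complex_of_real a * z) v = a *\<^sub>R cscale z v"
  unfolding cscale_def by (simp add: vec_eq_iff scC algebra_simps)

lemma inner_int_scale:
  assumes "a > 0"
  shows "inner_int \<psi> \<eta> (s / a) = a *\<^sub>R inner_int \<psi> ((1/a) *\<^sub>R \<eta>) s"
proof -
  have e: "\<eta> = a *\<^sub>R ((1/a) *\<^sub>R \<eta>)" using assms by simp
  have t: "(s / a) *\<^sub>R \<eta> = s *\<^sub>R ((1/a) *\<^sub>R \<eta>)" by simp
  have c: "cdot (cvec \<eta>) w = complex_of_real a * cdot (cvec ((1/a) *\<^sub>R \<eta>)) w" for w
    using cdot_scale[of a "(1/a) *\<^sub>R \<eta>" w] assms by simp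
  have p: "Pproj \<eta> w = Pproj ((1/a) *\<^sub>R \<eta>) w" for w
    using Pproj_scale[of "1/a" \<eta> w] assms by simp
  have "inner_integrand \<psi> \<eta> (s/a) = (\<lambda>x. a *\<^sub>R inner_integrand \<psi> ((1/a) *\<^sub>R \<eta>) s x)"
  proof
    fix x
    show "inner_integrand \<psi> \<eta> (s/a) x = a *\<^sub>R inner_integrand \<psi> ((1/a) *\<^sub>R \<eta>) s x"
      unfolding inner_integrand_def t c p cscale_mult ..
  qed
  then show ?thesis unfolding inner_int_def by simp
qed

lemma outer_scale:
  fixes \<psi> :: "real^'n \<Rightarrow> complex^'n"
  assumes a: "a > 0" and x: "x > 0"
  shows "outer_integrand \<gamma> \<psi> \<eta> (x / a) =
    (a * a powr cexp \<gamma> TYPE('n) * exp ((norm \<eta>) powr \<gamma> * (1 - a powr (-\<gamma>))))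
      *\<^sub>R outer_integrand \<gamma> \<psi> ((1/a) *\<^sub>R \<eta>) x"
proof -
  define c where "c = cexp \<gamma> TYPE('n)"
  define N where "N = (norm \<eta>) powr \<gamma>"
  have N': "(norm ((1/a) *\<^sub>R \<eta>)) powr \<gamma> = N / a powr \<gamma>"
    using a by (simp add: N_def powr_divide)
  have xa: "(x/a) powr \<gamma> = x powr \<gamma> / a powr \<gamma>" "(x/a) powr c = x powr c / a powr c"
    using a x by (simp_all add: powr_divide)
  have am: "a powr (-\<gamma>) = 1 / a powr \<gamma>" using a by (simp add: powr_minus_divide)
  have ex: "exp (N * (1 - x powr \<gamma> / a powr \<gamma>)) =
      exp (N * (1 - 1 / a powr \<gamma>)) * exp (N / a powr \<gamma> * (1 - x powr \<gamma>))"
    by (simp add: exp_add[symmetric] algebra_simps diff_divide_distrib)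
  have sc: "exp (N * (1 - x powr \<gamma> / a powr \<gamma>)) / (x powr c / a powr c) * a =
     a * a powr c * exp (N * (1 - 1 / a powr \<gamma>)) * (exp (N / a powr \<gamma> * (1 - x powr \<gamma>)) / x powr c)"
    unfolding ex using a x by (simp add: field_simps)
  show ?thesis
    unfolding outer_integrand_def inner_int_scale[OF a] N' xa am c_def[symmetric] N_def[symmetric]
    using sc by (simp add: scaleR_scaleR)
qed

lemma key:
  fixes \<psi> :: "real^'n \<Rightarrow> complex^'n"
  assumes a: "0 < a" "a \<le> 1" and b: "0 < b" "b \<le> 1"
    and int: "\<And>\<eta> T. T \<ge> 1 \<Longrightarrow> set_integrable lborel {1..T} (outer_integrand \<gamma> \<psi> \<eta>)"
  shows "Rop \<gamma> (a*b) \<psi> \<eta> =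
    (a powr cexp \<gamma> TYPE('n) * exp ((norm \<eta>) powr \<gamma> * (1 - a powr (-\<gamma>)))) *\<^sub>R Rop \<gamma> b \<psi> ((1/a) *\<^sub>R \<eta>)
    + cscale (\<i> * complex_of_real \<gamma>) (set_lebesgue_integral lborel {1..1/a} (outer_integrand \<gamma> \<psi> \<eta>))"
proof -
  define c where "c = cexp \<gamma> TYPE('n)"
  define E where "E = exp ((norm \<eta>) powr \<gamma> * (1 - a powr (-\<gamma>)))"
  define \<eta>' where "\<eta>' = (1/a) *\<^sub>R \<eta>"
  define F where "F = outer_integrand \<gamma> \<psi> \<eta>"
  define G where "G = outer_integrand \<gamma> \<psi> \<eta>'"
  have ia: "1 \<le> 1/a" using a by simp
  have iab: "1/a \<le> 1/(a*b)" using a b by (simp add: field_simps)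
  have ib: "1 \<le> 1/b" using b by simp
  have Fint: "set_integrable lborel {1..1/(a*b)} F" unfolding F_def using int ia iab by auto
  have un: "{1..1/(a*b)} = {1..1/a} \<union> {1/a<..1/(a*b)}" using ia iab by auto
  have S1: "set_lebesgue_integral lborel {1..1/(a*b)} F =
      set_lebesgue_integral lborel {1..1/a} F + set_lebesgue_integral lborel {1/a<..1/(a*b)} F"
    unfolding un
    by (rule set_integral_Un) (auto intro!: set_integrable_subset[OF Fint] simp: un)
  have S2: "set_lebesgue_integral lborel {1/a<..1/(a*b)} F =
     (a powr c * E) *\<^sub>R set_lebesgue_integral lborel {1<..1/b} G"
  proof -
    have "set_lebesgue_integral lborel {1/a<..1/(a*b)} F
       = \<bar>1/a\<bar> *\<^sub>R (\<integral>x. indicator {1/a<..1/(a*b)} (0 + (1/a) * x) *\<^sub>R F (0 + (1/a) * x) \<partial>lborel)"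
      unfolding set_lebesgue_integral_def
      by (rule lborel_integral_real_affine) (use a in simp)
    also have "(\<lambda>x. indicator {1/a<..1/(a*b)} (0 + (1/a) * x) *\<^sub>R F (0 + (1/a) * x))
        = (\<lambda>x. (a * a powr c * E) *\<^sub>R (indicator {1<..1/b} x *\<^sub>R G x))"
    proof
      fix x
      have iff: "(0 + (1/a) * x \<in> {1/a<..1/(a*b)}) = (x \<in> {1<..1/b})"
        using a b by (auto simp: field_simps)
      show "indicator {1/a<..1/(a*b)} (0 + (1/a) * x) *\<^sub>R F (0 + (1/a) * x)
        = (a * a powr c * E) *\<^sub>R (indicator {1<..1/b} x *\<^sub>R G x)"
      proof (cases "x \<in> {1<..1/b}")
        case True
        then have "x > 0" by auto
        then show ?thesis using True iff outer_scale[OF a(1) \<open>x > 0\<close>, of \<gamma> \<psi> \<eta>]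
          by (simp add: F_def G_def \<eta>'_def c_def E_def)
      next
        case False
        then show ?thesis using iff by (auto simp: indicator_def)
      qed
    qed
    finally show ?thesis using a unfolding integral_scaleR_right set_lebesgue_integral_def by simp
  qed
  have S3: "set_lebesgue_integral lborel {1<..1/b} G = set_lebesgue_integral lborel {1..1/b} G"
  proof -
    have Gi: "set_integrable lborel {1..1/b} G" unfolding G_def using int ib by auto
    have Gi2: "set_integrable lborel {1<..1/b} G" by (rule set_integrable_subset[OF Gi]) auto
    show ?thesis
      apply (rule set_integral_cong_set)
      using Gi Gi2 unfolding set_integrable_def set_borel_measurable_def
        apply (auto intro: borel_measurable_integrable)[2]
      using AE_lborel_singleton[of "1::real"] by eventually_elim auto
  qed
  have pc: "(a*b) powr c = a powr c * b powr c" using a b by (simp add: powr_mult)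
  have ex: "exp (norm \<eta> powr \<gamma> * (1 - (a * b) powr - \<gamma>)) =
     E * exp (norm \<eta>' powr \<gamma> * (1 - b powr - \<gamma>))"
  proof -
    have "norm \<eta>' powr \<gamma> = norm \<eta> powr \<gamma> * a powr - \<gamma>"
      using a by (simp add: \<eta>'_def powr_divide powr_minus_divide)
    moreover have "(a * b) powr - \<gamma> = a powr - \<gamma> * b powr - \<gamma>" using a b by (simp add: powr_mult)
    ultimately show ?thesis unfolding E_def by (simp add: exp_add[symmetric] algebra_simps)
  qed
  have arg: "(1 / (a*b)) *\<^sub>R \<eta> = (1/b) *\<^sub>R \<eta>'" by (simp add: \<eta>'_def)
  show ?thesis
    unfolding Rop_def c_def[symmetric] E_def[symmetric] \<eta>'_def[symmetric] F_def[symmetric] G_def[symmetric]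
      S1 S2 S3 pc ex arg
    by (simp add: cscale_add cscale_scaleR scaleR_add_right algebra_simps)
qed

lemma Rop_one:
  fixes \<psi> :: "real^'n \<Rightarrow> complex^'n"
  shows "Rop \<gamma> 1 \<psi> = \<psi>"
proof
  fix \<eta>
  have z: "set_lebesgue_integral lborel {1..1/1} (outer_integrand \<gamma> \<psi> \<eta>) = 0"
    unfolding set_lebesgue_integral_def
    by (rule integral_eq_zero_AE)
      (use AE_lborel_singleton[of "1::real"] in \<open>eventually_elim, auto\<close>)
  have c0: "cscale z (0::complex^'n) = 0" for z unfolding cscale_def by (simp add: vec_eq_iff)
  show "Rop \<gamma> 1 \<psi> \<eta> = \<psi> \<eta>"
    unfolding Rop_def z c0 by simp
qed

theorem lemma10p1:
  fixes \<psi> :: "real^'n \<Rightarrow> complex^'n" and \<gamma> \<beta> :: real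
  assumes "CARD('n) \<ge> 2"
    and "\<gamma> > 0"
    and "0 < \<beta>" and "\<beta> < 1"
    and "\<And>\<eta> t. t \<ge> 1 \<Longrightarrow> integrable lborel (inner_integrand \<psi> \<eta> t)"
    and "\<And>\<eta> T. T \<ge> 1 \<Longrightarrow> set_integrable lborel {1..T} (outer_integrand \<gamma> \<psi> \<eta>)"
    and "Rop \<gamma> \<beta> \<psi> = \<psi>"
  shows "\<forall>n::nat. Rop \<gamma> (\<beta> ^ n) \<psi> = \<psi>"
proof
  fix n :: nat
  show "Rop \<gamma> (\<beta> ^ n) \<psi> = \<psi>"
  proof (induction n)
    case 0
    then show ?case using Rop_one by simp
  next
    case (Suc n)
    have bn: "0 < \<beta> ^ n" "\<beta> ^ n \<le> 1" using assms(3,4) by (auto intro: power_le_one)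
    show ?case
    proof
      fix \<eta>
      have "Rop \<gamma> (\<beta> ^ Suc n) \<psi> \<eta> = Rop \<gamma> (\<beta> * \<beta> ^ n) \<psi> \<eta>" by simp
      also have "\<dots> = (\<beta> powr cexp \<gamma> TYPE('n) * exp ((norm \<eta>) powr \<gamma> * (1 - \<beta> powr (-\<gamma>)))) *\<^sub>R \<psi> ((1/\<beta>) *\<^sub>R \<eta>)
    + cscale (\<i> * complex_of_real \<gamma>) (set_lebesgue_integral lborel {1..1/\<beta>} (outer_integrand \<gamma> \<psi> \<eta>))"
        using key[OF assms(3) less_imp_le[OF assms(4)] bn assms(6), of \<eta>] Suc.IH
        by simp
      also have "\<dots> = Rop \<gamma> \<beta> \<psi> \<eta>"
        unfolding Rop_def ..
      also have "\<dots> = \<psi> \<eta>" using assms(7) by simp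
      finally show "Rop \<gamma> (\<beta> ^ Suc n) \<psi> \<eta> = \<psi> \<eta>" .
    qed
  qed
qed

end
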